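(* Let $(X,\|\cdot\|_X)$ be a normed linear space and $(Y,d_Y)$ a metric space. If there exists a map $f\colon X\to Y$ such that $\lim_{t\to\infty}\rho_f(t)=\infty$, then $\mathrm{dens}(X)\leq\mathrm{dens}(Y)$.
   Context: $\rho_f(t)=\inf\{d_Y(f(x_1),f(x_2)): \|x_1-x_2\|_X\geq t\}$ is the modulus of compression of $f$. $\mathrm{dens}(Z)$ denotes the density character of a metric space $Z$, the smallest cardinality of a dense subset. *)

theory Defs
  imports "HOL-Analysis.Analysis"
begin

text \<open>Modulus of compression of f, valued in extended reals (Inf of the empty set is \<infinity>).\<close>
definition compression_modulus :: "('a::real_normed_vector \<Rightarrow> 'b::metric_space) \<Rightarrow> real \<Rightarrow> ereal" where
  "compression_modulus f t =
     Inf {ereal (dist (f x1) (f x2)) | x1 x2. norm (x1 - x2) \<ge> t}"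

definition dense_subset :: "'a::topological_space set \<Rightarrow> bool" where
  "dense_subset D \<longleftrightarrow> closure D = UNIV"

text \<open>dens(X) \<le> dens(Y), where dens is the least cardinality of a dense subset:
  the minimum over dense subsets of X is at most the minimum over dense subsets of Y,
  i.e. every dense subset of Y is at least as large as some dense subset of X.\<close>
definition dens_le :: "'a::topological_space itself \<Rightarrow> 'b::topological_space itself \<Rightarrow> bool" where
  "dens_le _ _ \<longleftrightarrow>
     (\<forall>D::'b set. dense_subset D \<longrightarrow> (\<exists>E::'a set. dense_subset E \<and> ordLeq2 (card_of E) (card_of D)))"

end

theory Submission
  imports Defs
begin

unbundle cardinal_syntax

lemma sep_bound:
  fixes f :: "'a::real_normed_vector \<Rightarrow> 'b::metric_space"
  assumes "(compression_modulus f \<longlongrightarrow> \<infinity>) at_top"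
  shows "\<exists>R>0. \<forall>x1 x2. norm (x1 - x2) \<ge> R \<longrightarrow> dist (f x1) (f x2) > M"
proof -
  have "eventually (\<lambda>t. ereal M < compression_modulus f t) at_top"
    using assms tendsto_PInfty by blast
  then obtain N where N: "\<And>t. t \<ge> N \<Longrightarrow> ereal M < compression_modulus f t"
    by (auto simp: eventually_at_top_linorder)
  define R where "R = max N 1"
  have "R > 0" "R \<ge> N" by (auto simp: R_def)
  moreover have "dist (f x1) (f x2) > M" if "norm (x1 - x2) \<ge> R" for x1 x2
  proof -
    have "compression_modulus f R \<le> ereal (dist (f x1) (f x2))"
      unfolding compression_modulus_def using that by (intro Inf_lower) blast
    with N[OF \<open>R \<ge> N\<close>] have "ereal M < ereal (dist (f x1) (f x2))" by (rule less_le_trans)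
    thus ?thesis by simp
  qed
  ultimately show ?thesis by blast
qed

theorem lemma2p1:
  fixes f :: "'a::real_normed_vector \<Rightarrow> 'b::metric_space"
  assumes "(compression_modulus f \<longlongrightarrow> \<infinity>) at_top"
  shows "dens_le TYPE('a) TYPE('b)"
  unfolding dens_le_def
proof (intro allI impI)
  fix D :: "'b set"
  assume D: "dense_subset D"
  hence cD: "closure D = UNIV" by (simp add: dense_subset_def)
  have Dne: "D \<noteq> {}" using cD by auto
  show "\<exists>E::'a set. dense_subset E \<and> |E| \<le>o |D|"
  proof (cases "\<forall>a::'a. a = 0")
    case True
    hence "(UNIV::'a set) = {0}" by auto
    moreover have "|{0::'a}| \<le>o |D|" using card_of_singl_ordLeq[OF Dne] .
    ultimately show ?thesis by (metis closure_UNIV dense_subset_def)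
  next
    case False
    then obtain a :: 'a where a: "a \<noteq> 0" by auto
    have infD: "infinite D"
    proof
      assume fD: "finite D"
      hence "closed D" by (simp add: finite_imp_closed)
      hence UD: "(UNIV::'b set) = D" using cD by simp
      define S where "S = (\<lambda>(y,z). dist y z) ` (UNIV \<times> (UNIV::'b set))"
      have fU: "finite (UNIV::'b set)" using fD UD by simp
      have fS: "finite S" unfolding S_def using fU by (intro finite_imageI finite_cartesian_product) auto
      obtain R where R: "R > 0" "\<And>x1 x2. norm (x1 - x2) \<ge> R \<Longrightarrow> dist (f x1) (f x2) > Max S"
        using sep_bound[OF assms] by blast
      define x2 where "x2 = (R / norm a) *\<^sub>R a"
      have "norm (0 - x2) = R" using a R(1) by (simp add: x2_def)
      hence "dist (f 0) (f x2) > Max S" using R(2) by simp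
      moreover have "dist (f 0) (f x2) \<in> S" unfolding S_def by force
      ultimately show False using fS Max_ge by fastforce
    qed
    obtain R where R: "R > 0" "\<And>x1 x2. norm (x1 - x2) \<ge> R \<Longrightarrow> dist (f x1) (f x2) > 1"
      using sep_bound[OF assms] by blast
    define g where "g d = (SOME x. dist (f x) d < 1/2)" for d
    have net: "\<exists>d\<in>D. norm (x - g d) < R" for x
    proof -
      have "f x \<in> closure D" using cD by simp
      then obtain d where d: "d \<in> D" "dist d (f x) < 1/2"
        unfolding closure_approachable by (meson half_gt_zero zero_less_one)
      hence "\<exists>y. dist (f y) d < 1/2" by (metis dist_commute)
      hence gd: "dist (f (g d)) d < 1/2" unfolding g_def by (rule someI_ex)
      have "dist (f x) (f (g d)) \<le> dist (f x) d + dist d (f (g d))" by (rule dist_triangle)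
      also have "\<dots> < 1" using d gd by (simp add: dist_commute)
      finally have "\<not> norm (x - g d) \<ge> R" using R(2)[of x "g d"] by auto
      thus ?thesis using d(1) by (meson not_le)
    qed
    define h where "h = (\<lambda>(n::nat, d). g d /\<^sub>R real (Suc n))"
    define E where "E = h ` (UNIV \<times> D)"
    have "closure E = UNIV"
    proof (intro set_eqI iffI)
      fix z :: 'a
      show "z \<in> closure E" unfolding closure_approachable
      proof (intro allI impI)
        fix e :: real assume e: "e > 0"
        obtain n :: nat where n: "R / e < real n" using reals_Archimedean2 by blast
        obtain d where d: "d \<in> D" "norm (real (Suc n) *\<^sub>R z - g d) < R" using net by blast
        have pos: "real (Suc n) > 0" by simp
        have "dist (h (n, d)) z = norm (real (Suc n) *\<^sub>R z - g d) / real (Suc n)"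
        proof -
          have "g d /\<^sub>R real (Suc n) - z = (g d - real (Suc n) *\<^sub>R z) /\<^sub>R real (Suc n)"
            using pos by (simp add: scaleR_diff_right)
          thus ?thesis by (simp add: h_def dist_norm norm_minus_commute divide_inverse mult.commute)
        qed
        also have "\<dots> < R / real (Suc n)" using d(2) pos by (simp add: divide_strict_right_mono)
        also have "\<dots> \<le> e"
        proof -
          have "R < e * real (Suc n)" using n e by (simp add: field_simps)
          thus ?thesis using pos e by (simp add: field_simps)
        qed
        finally show "\<exists>y\<in>E. dist y z < e" using d(1) unfolding E_def by force
      qed
    qed simp
    moreover have "|E| \<le>o |D|"
    proof -
      have "|E| \<le>o |(UNIV::nat set) \<times> D|" unfolding E_def by (rule card_of_image)
      moreover have "|(UNIV::nat set) \<times> D| =o |D|"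
        using card_of_Times_infinite[OF infD _ infinite_iff_card_of_nat[THEN iffD1, OF infD]] by auto
      ultimately show ?thesis using ordLeq_ordIso_trans by blast
    qed
    ultimately show ?thesis unfolding dense_subset_def by blast
  qed
qed

end
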